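(* Let $H$ be a homogeneous relation on a finite set $V$. If $H$ fulfills A2 or A3, then $\mathcal F_H$ is a weakly partitive family. If $H$ fulfills A1, then $\mathcal F_H$ is a partitive family.
   Context: $V$ is a finite set. A reflectless triple is a triple $(x,y,z)\in V^3$ with $x\neq y$ and $x\neq z$, written $(x|yz)$. A homogeneous relation $H$ on $V$ is a set of reflectless triples (we write $H(s|xy)$ when $(s|xy)\in H$, and $H(s|xy)$ is considered false when $(s|xy)$ is not reflectless) such that for every $s\in V$ the binary relation $H_s=\{(x,y): H(s|xy)\}$ is an equivalence relation on $V\setminus\{s\}$. For $X\subseteq V$ and $s\notin X$, $s$ distinguishes $X$ if there are $x,y\in X$ with not $H(s|xy)$. A homogeneous set is a nonempty $M\subseteq V$ such that no element of $V\setminus M$ distinguishes $M$; $\mathcal F_H$ denotes the family of homogeneous sets. Axioms (required for all elements for which every triple appearing is reflectless): A1: $H(x|yz)\wedge H(y|xz)\Rightarrow H(z|xy)$. A2: $H(x|st)\wedge H(y|st)\wedge H(t|xy)\Rightarrow H(s|xy)$. A3: $H(x|st)\wedge H(y|st)\wedge H(t|sx)\wedge H(t|sy)\Rightarrow H(s|xy)$. Two sets $A,B$ overlap if $A\cap B$, $A\setminus B$, $B\setminus A$ are all nonempty. A family $\mathcal F\subseteq\mathcal P(V)$ is weakly partitive if it contains $V$ and every singleton $\{v\}$, $v\in V$, and for all overlapping $A,B\in\mathcal F$ the sets $A\cap B$, $A\cup B$, $A\setminus B$ belong to $\mathcal F$. It is partitive if moreover for all overlapping $A,B\in\mathcal F$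 the symmetric difference $A\Delta B=(A\setminus B)\cup(B\setminus A)$ belongs to $\mathcal F$. *)

theory Defs
  imports Main
begin

text \<open>Triples (x,y,z) represent (x|yz). A triple is reflectless if x \<noteq> y and x \<noteq> z.\<close>

definition reflectless :: "'a \<times> 'a \<times> 'a \<Rightarrow> bool" where
  "reflectless t = (case t of (x, y, z) \<Rightarrow> x \<noteq> y \<and> x \<noteq> z)"

definition Hrel :: "('a \<times> 'a \<times> 'a) set \<Rightarrow> 'a \<Rightarrow> 'a \<Rightarrow> 'a \<Rightarrow> bool" where
  "Hrel H s x y = ((s, x, y) \<in> H \<and> reflectless (s, x, y))"

definition homogeneous_relation :: "'a set \<Rightarrow> ('a \<times> 'a \<times> 'a) set \<Rightarrow> bool" where
  "homogeneous_relation V H =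
     (H \<subseteq> V \<times> V \<times> V \<and> (\<forall>t\<in>H. reflectless t) \<and>
      (\<forall>s\<in>V. equiv (V - {s}) {(x, y). Hrel H s x y}))"

definition distinguishes :: "('a \<times> 'a \<times> 'a) set \<Rightarrow> 'a \<Rightarrow> 'a set \<Rightarrow> bool" where
  "distinguishes H s X = (s \<notin> X \<and> (\<exists>x\<in>X. \<exists>y\<in>X. \<not> Hrel H s x y))"

definition homogeneous_sets :: "'a set \<Rightarrow> ('a \<times> 'a \<times> 'a) set \<Rightarrow> 'a set set" where
  "homogeneous_sets V H =
     {M. M \<noteq> {} \<and> M \<subseteq> V \<and> (\<forall>s\<in>V - M. \<not> distinguishes H s M)}"

definition axiom_A1 :: "'a set \<Rightarrow> ('a \<times> 'a \<times> 'a) set \<Rightarrow> bool" where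
  "axiom_A1 V H = (\<forall>x\<in>V. \<forall>y\<in>V. \<forall>z\<in>V.
     x \<noteq> y \<and> x \<noteq> z \<and> y \<noteq> z \<longrightarrow>
     Hrel H x y z \<and> Hrel H y x z \<longrightarrow> Hrel H z x y)"

definition axiom_A2 :: "'a set \<Rightarrow> ('a \<times> 'a \<times> 'a) set \<Rightarrow> bool" where
  "axiom_A2 V H = (\<forall>x\<in>V. \<forall>y\<in>V. \<forall>s\<in>V. \<forall>t\<in>V.
     x \<noteq> s \<and> x \<noteq> t \<and> y \<noteq> s \<and> y \<noteq> t \<longrightarrow>
     Hrel H x s t \<and> Hrel H y s t \<and> Hrel H t x y \<longrightarrow> Hrel H s x y)"

definition axiom_A3 :: "'a set \<Rightarrow> ('a \<times> 'a \<times> 'a) set \<Rightarrow> bool" where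
  "axiom_A3 V H = (\<forall>x\<in>V. \<forall>y\<in>V. \<forall>s\<in>V. \<forall>t\<in>V.
     x \<noteq> s \<and> x \<noteq> t \<and> y \<noteq> s \<and> y \<noteq> t \<and> t \<noteq> s \<longrightarrow>
     Hrel H x s t \<and> Hrel H y s t \<and> Hrel H t s x \<and> Hrel H t s y \<longrightarrow> Hrel H s x y)"

definition overlap :: "'a set \<Rightarrow> 'a set \<Rightarrow> bool" where
  "overlap A B = (A \<inter> B \<noteq> {} \<and> A - B \<noteq> {} \<and> B - A \<noteq> {})"

definition weakly_partitive :: "'a set \<Rightarrow> 'a set set \<Rightarrow> bool" where
  "weakly_partitive V F =
     (F \<subseteq> Pow V \<and> V \<in> F \<and> (\<forall>v\<in>V. {v} \<in> F) \<and>
      (\<forall>A\<in>F. \<forall>B\<in>F. overlap A B \<longrightarrow> A \<inter> B \<in> F \<and> A \<union> B \<in> F \<and> A - B \<in> F))"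

definition partitive :: "'a set \<Rightarrow> 'a set set \<Rightarrow> bool" where
  "partitive V F =
     (weakly_partitive V F \<and>
      (\<forall>A\<in>F. \<forall>B\<in>F. overlap A B \<longrightarrow> (A - B) \<union> (B - A) \<in> F))"

end

theory Submission
  imports Defs
begin

lemma hr_refl:
  assumes "homogeneous_relation V H" "s \<in> V" "x \<in> V" "x \<noteq> s"
  shows "Hrel H s x x"
proof -
  have "equiv (V - {s}) {(x, y). Hrel H s x y}" using assms unfolding homogeneous_relation_def by blast
  then show ?thesis using assms by (auto simp: equiv_def refl_on_def)
qed

lemma hr_sym:
  assumes "homogeneous_relation V H" "Hrel H s x y"
  shows "Hrel H s y x"
proof -
  have s: "s \<in> V" using assms unfolding homogeneous_relation_def Hrel_def by blast
  have "equiv (V - {s}) {(x, y). Hrel H s x y}" using assms s unfolding homogeneous_relation_def by blast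
  then show ?thesis using assms by (auto simp: equiv_def sym_def)
qed

lemma hr_trans:
  assumes "homogeneous_relation V H" "Hrel H s x y" "Hrel H s y z"
  shows "Hrel H s x z"
proof -
  have s: "s \<in> V" using assms unfolding homogeneous_relation_def Hrel_def by blast
  have "equiv (V - {s}) {(x, y). Hrel H s x y}" using assms s unfolding homogeneous_relation_def by blast
  then show ?thesis using assms unfolding equiv_def trans_def by blast
qed

lemma hs_use:
  assumes "M \<in> homogeneous_sets V H" "s \<in> V" "s \<notin> M" "x \<in> M" "y \<in> M"
  shows "Hrel H s x y"
  using assms unfolding homogeneous_sets_def distinguishes_def by blast

lemma hs_intro:
  assumes "M \<noteq> {}" "M \<subseteq> V" "\<And>s x y. s \<in> V \<Longrightarrow> s \<notin> M \<Longrightarrow> x \<in> M \<Longrightarrow> y \<in> M \<Longrightarrow> Hrel H s x y"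
  shows "M \<in> homogeneous_sets V H"
  using assms unfolding homogeneous_sets_def distinguishes_def by blast

lemma hs_sub: "M \<in> homogeneous_sets V H \<Longrightarrow> M \<subseteq> V"
  unfolding homogeneous_sets_def by blast

lemma basic:
  assumes hr: "homogeneous_relation V H" and "V \<noteq> {}"
  shows "homogeneous_sets V H \<subseteq> Pow V \<and> V \<in> homogeneous_sets V H \<and> (\<forall>v\<in>V. {v} \<in> homogeneous_sets V H)
     \<and> (\<forall>A\<in>homogeneous_sets V H. \<forall>B\<in>homogeneous_sets V H. overlap A B \<longrightarrow>
          A \<inter> B \<in> homogeneous_sets V H \<and> A \<union> B \<in> homogeneous_sets V H)"
proof (intro conjI ballI impI)
  show "homogeneous_sets V H \<subseteq> Pow V" using hs_sub by blast
  show "V \<in> homogeneous_sets V H" using assms by (intro hs_intro) auto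
  fix v assume v: "v \<in> V"
  show "{v} \<in> homogeneous_sets V H" using v by (intro hs_intro) (auto intro: hr_refl[OF hr])
next
  fix A B assume A: "A \<in> homogeneous_sets V H" and B: "B \<in> homogeneous_sets V H" and ov: "overlap A B"
  show "A \<inter> B \<in> homogeneous_sets V H"
  proof (rule hs_intro)
    show "A \<inter> B \<noteq> {}" using ov unfolding overlap_def by blast
    show "A \<inter> B \<subseteq> V" using hs_sub[OF A] by blast
    fix s x y assume "s \<in> V" "s \<notin> A \<inter> B" "x \<in> A \<inter> B" "y \<in> A \<inter> B"
    then show "Hrel H s x y" using hs_use[OF A] hs_use[OF B] by blast
  qed
  show "A \<union> B \<in> homogeneous_sets V H"
  proof (rule hs_intro)
    show "A \<union> B \<noteq> {}" using ov unfolding overlap_def by blast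
    show "A \<union> B \<subseteq> V" using hs_sub[OF A] hs_sub[OF B] by blast
    obtain c where c: "c \<in> A" "c \<in> B" using ov unfolding overlap_def by blast
    fix s x y assume s: "s \<in> V" "s \<notin> A \<union> B" and xy: "x \<in> A \<union> B" "y \<in> A \<union> B"
    have "Hrel H s x c" using xy(1) c s hs_use[OF A] hs_use[OF B] by blast
    moreover have "Hrel H s c y" using xy(2) c s hs_use[OF A] hs_use[OF B] by blast
    ultimately show "Hrel H s x y" using hr_trans[OF hr] by blast
  qed
qed

lemma Hrel_V: "homogeneous_relation V H \<Longrightarrow> Hrel H s x y \<Longrightarrow> s \<in> V \<and> x \<in> V \<and> y \<in> V \<and> s \<noteq> x \<and> s \<noteq> y"
  unfolding homogeneous_relation_def Hrel_def reflectless_def by auto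

lemma diff_gen:
  assumes hr: "homogeneous_relation V H"
    and A: "A \<in> homogeneous_sets V H" and B: "B \<in> homogeneous_sets V H" and ov: "overlap A B"
    and key: "\<And>s x y t. s \<in> A \<Longrightarrow> s \<in> B \<Longrightarrow> x \<in> A - B \<Longrightarrow> y \<in> A - B \<Longrightarrow> t \<in> B - A \<Longrightarrow> Hrel H s x y"
  shows "A - B \<in> homogeneous_sets V H"
proof (rule hs_intro)
  show "A - B \<noteq> {}" using ov unfolding overlap_def by blast
  show "A - B \<subseteq> V" using hs_sub[OF A] by blast
  obtain t where t: "t \<in> B - A" using ov unfolding overlap_def by blast
  fix s x y assume s: "s \<in> V" "s \<notin> A - B" and xy: "x \<in> A - B" "y \<in> A - B"
  show "Hrel H s x y"
  proof (cases "s \<in> A")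
    case True then show ?thesis using key[OF True _ xy t] s by blast
  next
    case False then show ?thesis using hs_use[OF A] s xy by blast
  qed
qed

lemma A1_cross:
  assumes hr: "homogeneous_relation V H" and a1: "axiom_A1 V H"
    and A: "A \<in> homogeneous_sets V H" and B: "B \<in> homogeneous_sets V H"
    and s: "s \<in> A" "s \<in> B" and x: "x \<in> A - B" and t: "t \<in> B - A"
  shows "Hrel H s x t"
proof -
  have V: "s \<in> V" "x \<in> V" "t \<in> V" using s x t hs_sub[OF A] hs_sub[OF B] by auto
  have 1: "Hrel H x t s" using hs_use[OF B, of x t s] V x t s by auto
  have 2: "Hrel H t x s" using hs_use[OF A, of t x s] V x t s by auto
  have "x \<noteq> t" "x \<noteq> s" "t \<noteq> s" using x t s by auto
  then show ?thesis using a1 1 2 V unfolding axiom_A1_def by blast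
qed

lemma A1_diff:
  assumes hr: "homogeneous_relation V H" and a1: "axiom_A1 V H"
    and A: "A \<in> homogeneous_sets V H" and B: "B \<in> homogeneous_sets V H"
    and s: "s \<in> A" "s \<in> B" and x: "x \<in> A - B" and y: "y \<in> A - B" and t: "t \<in> B - A"
  shows "Hrel H s x y"
proof -
  have "Hrel H s x t" by (rule A1_cross[OF hr a1 A B s x t])
  moreover have "Hrel H s t y" using A1_cross[OF hr a1 A B s y t] hr_sym[OF hr] by blast
  ultimately show ?thesis using hr_trans[OF hr] by blast
qed

lemma A2_diff:
  assumes hr: "homogeneous_relation V H" and a2: "axiom_A2 V H \<or> axiom_A3 V H"
    and A: "A \<in> homogeneous_sets V H" and B: "B \<in> homogeneous_sets V H"
    and s: "s \<in> A" "s \<in> B" and x: "x \<in> A - B" and y: "y \<in> A - B" and t: "t \<in> B - A"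
  shows "Hrel H s x y"
proof -
  have V: "s \<in> V" "x \<in> V" "t \<in> V" "y \<in> V" using s x y t hs_sub[OF A] hs_sub[OF B] by auto
  have 1: "Hrel H x s t" using hs_use[OF B, of x s t] V x t s by auto
  have 2: "Hrel H y s t" using hs_use[OF B, of y s t] V y t s by auto
  have 3: "Hrel H t x y" using hs_use[OF A, of t x y] V x y t by auto
  have 4: "Hrel H t s x" using hs_use[OF A, of t s x] V x t s by auto
  have 5: "Hrel H t s y" using hs_use[OF A, of t s y] V y t s by auto
  have "x \<noteq> s" "x \<noteq> t" "y \<noteq> s" "y \<noteq> t" "t \<noteq> s" using x y t s by auto
  then show ?thesis using a2 1 2 3 4 5 V unfolding axiom_A2_def axiom_A3_def by blast
qed

lemma wp_intro:
  assumes hr: "homogeneous_relation V H" and ne: "V \<noteq> {}"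
    and d: "\<And>A B. A \<in> homogeneous_sets V H \<Longrightarrow> B \<in> homogeneous_sets V H \<Longrightarrow> overlap A B \<Longrightarrow> A - B \<in> homogeneous_sets V H"
  shows "weakly_partitive V (homogeneous_sets V H)"
  using basic[OF hr ne] d unfolding weakly_partitive_def by blast

theorem mainTheorem8:
  fixes V :: "'a set" and H :: "('a \<times> 'a \<times> 'a) set"
  assumes "finite V" and "V \<noteq> {}" and "homogeneous_relation V H"
  shows "(axiom_A2 V H \<or> axiom_A3 V H \<longrightarrow> weakly_partitive V (homogeneous_sets V H))
       \<and> (axiom_A1 V H \<longrightarrow> partitive V (homogeneous_sets V H))"
proof (intro conjI impI)
  note hr = assms(3)
  assume a2: "axiom_A2 V H \<or> axiom_A3 V H"
  show "weakly_partitive V (homogeneous_sets V H)"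
  proof (rule wp_intro[OF hr assms(2)])
    fix A B assume A: "A \<in> homogeneous_sets V H" and B: "B \<in> homogeneous_sets V H" and ov: "overlap A B"
    show "A - B \<in> homogeneous_sets V H"
      by (rule diff_gen[OF hr A B ov]) (rule A2_diff[OF hr a2 A B], auto)
  qed
next
  note hr = assms(3)
  note b = basic[OF hr assms(2)]
  assume a1: "axiom_A1 V H"
  have wp: "weakly_partitive V (homogeneous_sets V H)"
  proof (rule wp_intro[OF hr assms(2)])
    fix A B assume A: "A \<in> homogeneous_sets V H" and B: "B \<in> homogeneous_sets V H" and ov: "overlap A B"
    show "A - B \<in> homogeneous_sets V H"
      by (rule diff_gen[OF hr A B ov]) (rule A1_diff[OF hr a1 A B], auto)
  qed
  have un: "A \<union> B \<in> homogeneous_sets V H" if "A \<in> homogeneous_sets V H" "B \<in> homogeneous_sets V H" "overlap A B" for A B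
    using b that by blast
  have "(A - B) \<union> (B - A) \<in> homogeneous_sets V H"
    if A: "A \<in> homogeneous_sets V H" and B: "B \<in> homogeneous_sets V H" and ov: "overlap A B" for A B
  proof (rule hs_intro)
    show "(A - B) \<union> (B - A) \<noteq> {}" using ov unfolding overlap_def by blast
    show "(A - B) \<union> (B - A) \<subseteq> V" using hs_sub[OF A] hs_sub[OF B] by blast
    obtain t where t: "t \<in> B - A" using ov unfolding overlap_def by blast
    obtain u where u: "u \<in> A - B" using ov unfolding overlap_def by blast
    fix s x y assume s: "s \<in> V" "s \<notin> (A - B) \<union> (B - A)" and xy: "x \<in> (A - B) \<union> (B - A)" "y \<in> (A - B) \<union> (B - A)"
    show "Hrel H s x y"
    proof (cases "s \<in> A")
      case False
      then have "s \<notin> A \<union> B" using s by blast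
      moreover have "x \<in> A \<union> B" "y \<in> A \<union> B" using xy by auto
      ultimately show ?thesis using hs_use[OF un[OF A B ov] s(1)] by blast
    next
      case True
      then have sB: "s \<in> B" using s by blast
      have ab: "Hrel H s a b" if "a \<in> A - B" "b \<in> B - A" for a b
        using A1_cross[OF hr a1 A B True sB that] .
      have aa: "Hrel H s a b" if "a \<in> A - B" "b \<in> A - B" for a b
        using A1_diff[OF hr a1 A B True sB that t] .
      have bb: "Hrel H s a b" if "a \<in> B - A" "b \<in> B - A" for a b
        using A1_diff[OF hr a1 B A sB True that u] .
      have ba: "Hrel H s a b" if "a \<in> B - A" "b \<in> A - B" for a b
        using hr_sym[OF hr ab[OF that(2) that(1)]] .
      show ?thesis using xy ab aa bb ba by blast
    qed
  qed
  then show "partitive V (homogeneous_sets V H)"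
    unfolding partitive_def using wp by blast
qed

end
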